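(* Let $\mu_e>0,\sigma^2>0$ and consider $N$ players, player $i$ having $n_i>0$ samples, federating with optimal fine-grained federation. Then the error of player $j$ is $$\frac{\mu_e/n_j}{V_j\cdot T}\left(1+\sigma^2\left(T-\frac{1}{V_j}\right)\right),$$ where $V_i=\sigma^2+\frac{\mu_e}{n_i}$ and $T=\sum_{i=1}^N\frac{1}{V_i}$.
   Context: In the mean-estimation model, $\mu_e$ is the average sampling noise and $\sigma^2$ the variance of players' true means. In fine-grained federation, player $j$ uses the weighted combination $\sum_i v_{ji}\hat\theta_i$ of all players' local estimates with real weights satisfying $\sum_{i=1}^N v_{ji}=1$; with weights $v_{j\cdot}$ its expected squared error is $$\mu_e\sum_{i=1}^N\frac{v_{ji}^2}{n_i}+\sigma^2\left(\sum_{i\neq j}v_{ji}^2+\Big(\sum_{i\neq j}v_{ji}\Big)^2\right).$$ Optimal fine-grained federation uses the weights minimizing this expression, and the player's error is this minimum value. *)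

theory Defs
  imports "HOL-Analysis.Analysis"
begin

text \<open>Players are indexed by 1..N; n i is the sample count of player i.
  Weights of player j are a function v :: nat => real (only values on 1..N matter).\<close>

definition fg_error :: "real \<Rightarrow> real \<Rightarrow> nat \<Rightarrow> (nat \<Rightarrow> real) \<Rightarrow> nat \<Rightarrow> (nat \<Rightarrow> real) \<Rightarrow> real" where
  "fg_error mu_e sigma2 N n j v =
     mu_e * (\<Sum>i=1..N. (v i)^2 / n i)
     + sigma2 * ((\<Sum>i\<in>{1..N}-{j}. (v i)^2) + (\<Sum>i\<in>{1..N}-{j}. v i)^2)"

definition fg_errors :: "real \<Rightarrow> real \<Rightarrow> nat \<Rightarrow> (nat \<Rightarrow> real) \<Rightarrow> nat \<Rightarrow> real set" where
  "fg_errors mu_e sigma2 N n j =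
     {fg_error mu_e sigma2 N n j v | v. (\<Sum>i=1..N. v i) = 1}"

definition opt_fg_error :: "real \<Rightarrow> real \<Rightarrow> nat \<Rightarrow> (nat \<Rightarrow> real) \<Rightarrow> nat \<Rightarrow> real" where
  "opt_fg_error mu_e sigma2 N n j = Inf (fg_errors mu_e sigma2 N n j)"

end

theory Submission
  imports Defs
begin

theorem lemmaA1:
  fixes mu_e sigma2 :: real and N j :: nat and n :: "nat \<Rightarrow> real"
  assumes "mu_e > 0" and "sigma2 > 0"
    and "\<And>i. i \<in> {1..N} \<Longrightarrow> n i > 0"
    and "j \<in> {1..N}"
  defines "V \<equiv> (\<lambda>i. sigma2 + mu_e / n i)"
  defines "T \<equiv> (\<Sum>i=1..N. 1 / V i)"
  shows "((mu_e / n j) / (V j * T) * (1 + sigma2 * (T - 1 / V j))) \<in> fg_errors mu_e sigma2 N n j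
         \<and> (\<forall>e\<in>fg_errors mu_e sigma2 N n j.
               (mu_e / n j) / (V j * T) * (1 + sigma2 * (T - 1 / V j)) \<le> e)
         \<and> opt_fg_error mu_e sigma2 N n j
           = (mu_e / n j) / (V j * T) * (1 + sigma2 * (T - 1 / V j))"
proof -
  let ?I = "{1..N}"
  let ?s = sigma2
  define tgt where "tgt = (mu_e / n j) / (V j * T) * (1 + sigma2 * (T - 1 / V j))"
  have Vpos: "V i > 0" if "i \<in> ?I" for i
    using assms(1,2) assms(3)[OF that] unfolding V_def by (simp add: add_pos_pos)
  have Tpos: "T > 0" unfolding T_def
    using assms(4) Vpos by (intro sum_pos) auto
  have fin: "finite ?I" by simp
  define G where "G v = (\<Sum>i\<in>?I. V i * (v i)^2) - 2 * ?s * v j + ?s" for v :: "nat \<Rightarrow> real"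
  have fgG: "fg_error mu_e sigma2 N n j v = G v" if sv: "(\<Sum>i=1..N. v i) = 1" for v
  proof -
    have r1: "(\<Sum>i\<in>?I-{j}. v i) = 1 - v j"
      using sum.remove[OF fin assms(4), of v] sv by simp
    have r2: "(\<Sum>i\<in>?I-{j}. (v i)^2) = (\<Sum>i\<in>?I. (v i)^2) - (v j)^2"
      using sum.remove[OF fin assms(4), of "\<lambda>i. (v i)^2"] by simp
    have r3: "mu_e * (\<Sum>i=1..N. (v i)^2 / n i) + sigma2 * (\<Sum>i\<in>?I. (v i)^2)
        = (\<Sum>i\<in>?I. V i * (v i)^2)"
      unfolding V_def by (simp add: sum_distrib_left sum.distrib[symmetric] algebra_simps)
    show ?thesis unfolding fg_error_def G_def r1 r2
      using r3 by (simp add: power2_eq_square algebra_simps)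
  qed
  define c where "c = (1 - ?s / V j) / T"
  define vs where "vs i = (c + (if i = j then ?s else 0)) / V i" for i
  have Vvs: "V i * vs i = c + (if i = j then ?s else 0)" if "i \<in> ?I" for i
    using Vpos[OF that] unfolding vs_def by simp
  have sumvs: "(\<Sum>i=1..N. vs i) = 1"
  proof -
    have "(\<Sum>i\<in>?I. vs i) = (\<Sum>i\<in>?I. c * (1 / V i) + (if i = j then ?s / V j else 0))"
      unfolding vs_def by (intro sum.cong) (auto simp: add_divide_distrib)
    also have "\<dots> = c * T + ?s / V j"
      using assms(4) by (simp add: sum.distrib sum_distrib_left T_def)
    also have "\<dots> = 1" unfolding c_def using Tpos by simp
    finally show ?thesis .
  qed
  have key: "G v = G vs + (\<Sum>i\<in>?I. V i * (v i - vs i)^2)" if sv: "(\<Sum>i=1..N. v i) = 1" for v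
  proof -
    define w where "w i = v i - vs i" for i
    have sw: "(\<Sum>i\<in>?I. w i) = 0" unfolding w_def using sv sumvs by (simp add: sum_subtractf)
    have e1: "(\<Sum>i\<in>?I. V i * (v i)^2) = (\<Sum>i\<in>?I. V i * (vs i)^2)
        + 2 * (\<Sum>i\<in>?I. V i * vs i * w i) + (\<Sum>i\<in>?I. V i * (w i)^2)"
      unfolding w_def by (simp add: sum.distrib[symmetric] sum_distrib_left power2_eq_square algebra_simps)
    have e2: "(\<Sum>i\<in>?I. V i * vs i * w i) = (\<Sum>i\<in>?I. c * w i + (if i = j then ?s * w j else 0))"
      by (intro sum.cong) (auto simp: Vvs algebra_simps)
    have e3: "(\<Sum>i\<in>?I. c * w i + (if i = j then ?s * w j else 0)) = ?s * w j"
      using assms(4) sw by (simp add: sum.distrib sum_distrib_left[symmetric])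
    show ?thesis unfolding G_def e1 e2 e3 by (simp add: w_def algebra_simps)
  qed
  have Gvs: "G vs = tgt"
  proof -
    have "(\<Sum>i\<in>?I. V i * (vs i)^2) = (\<Sum>i\<in>?I. c * vs i + (if i = j then ?s * vs j else 0))"
    proof (intro sum.cong refl)
      fix i assume i: "i \<in> ?I"
      have "V i * (vs i)^2 = (V i * vs i) * vs i" by (simp add: power2_eq_square)
      also have "\<dots> = (c + (if i = j then ?s else 0)) * vs i" using Vvs[OF i] by simp
      finally show "V i * (vs i)^2 = c * vs i + (if i = j then ?s * vs j else 0)"
        by (auto simp: algebra_simps)
    qed
    also have "\<dots> = c + ?s * vs j"
      using assms(4) sumvs by (simp add: sum.distrib sum_distrib_left[symmetric])
    finally have h: "G vs = c + ?s * vs j - 2 * ?s * vs j + ?s" unfolding G_def by simp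
    have Vj: "V j > 0" using Vpos assms(4) by simp
    have nj: "n j > 0" using assms(3,4) by simp
    have Vjd: "V j = ?s + mu_e / n j" unfolding V_def by simp
    define a where "a = mu_e / n j"
    have Vja: "V j = ?s + a" unfolding a_def Vjd ..
    have alg: "\<And>(a::real) s T W. W = s + a \<Longrightarrow> W > 0 \<Longrightarrow> T > 0 \<Longrightarrow>
      (1 - s / W) / T + s * (((1 - s / W) / T + s) / W) - 2 * s * (((1 - s / W) / T + s) / W) + s
      = a / (W * T) * (1 + s * (T - 1 / W))"
    proof -
      fix a s T W :: real assume W: "W = s + a" "W > 0" and T: "T > 0"
      have 1: "1 - s / W = a / W" using W by (simp add: field_simps)
      define cc where "cc = a / W / T"
      have cT: "cc * T = a / W" unfolding cc_def using T by simp
      have "(1 - s / W) / T + s * (((1 - s / W) / T + s) / W) - 2 * s * (((1 - s / W) / T + s) / W) + s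
          = cc + s - s * cc / W - s * s / W" unfolding 1 cc_def[symmetric] using W(2) by (simp add: field_simps)
      also have "\<dots> = cc + s * (cc * T) - s * cc / W"
        unfolding cT using W by (simp add: field_simps)
      also have "\<dots> = a / (W * T) * (1 + s * (T - 1 / W))"
        unfolding cc_def using W(2) T by (simp add: field_simps)
      finally show "(1 - s / W) / T + s * (((1 - s / W) / T + s) / W) - 2 * s * (((1 - s / W) / T + s) / W) + s
      = a / (W * T) * (1 + s * (T - 1 / W))" .
    qed
    show ?thesis unfolding h tgt_def vs_def c_def using alg[OF Vja Vj Tpos]
      by (simp add: a_def)
  qed
  have mem: "tgt \<in> fg_errors mu_e sigma2 N n j"
    unfolding fg_errors_def using fgG[OF sumvs] Gvs sumvs by auto
  have low: "\<forall>e\<in>fg_errors mu_e sigma2 N n j. tgt \<le> e"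
  proof
    fix e assume "e \<in> fg_errors mu_e sigma2 N n j"
    then obtain v where sv: "(\<Sum>i=1..N. v i) = 1" and e: "e = fg_error mu_e sigma2 N n j v"
      unfolding fg_errors_def by auto
    have "0 \<le> (\<Sum>i\<in>?I. V i * (v i - vs i)^2)"
      using Vpos by (intro sum_nonneg) (simp add: less_imp_le)
    then show "tgt \<le> e" using e fgG[OF sv] key[OF sv] Gvs by simp
  qed
  have "opt_fg_error mu_e sigma2 N n j = tgt"
    unfolding opt_fg_error_def using mem low by (intro cInf_eq_minimum) auto
  then show ?thesis using mem low unfolding tgt_def by simp
qed

end
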